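(* Let $X$ be an arbitrary Banach space and $A$ the generator of a $C_0$-semigroup $\mathbf T=\{T(t)\}_{t\ge0}$ on $X$. If there exists $Q\in B^{+}(X,X^{*})$ such that $\langle QAx,x\rangle+\langle Qx,Ax\rangle\le -\|x\|^{2}$ for all $x\in D(A)$, then $\mathbf T$ is uniformly exponentially stable, i.e. there exist $M\ge1$, $\varepsilon>0$ with $\|T(t)\|\le Me^{-\varepsilon t}$ for all $t\ge0$.
   Context: $X^{*}$ denotes the space of all bounded antilinear functionals on $X$, and $\langle f,x\rangle$ denotes the duality pairing of $f\in X^{*}$ with $x\in X$. $B(X,X^{*})$ is the space of bounded linear operators $X\to X^{*}$. An operator $Q\in B(X,X^{*})$ is positive if $\langle Qx,x\rangle\ge 0$ (in particular real) for all $x\in X$; $B^{+}(X,X^{*})$ is the set of positive operators in $B(X,X^{*})$. *)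

theory Defs
  imports "HOL-Analysis.Analysis" "HOL-Library.Complex_Order"
begin

class cbanach = banach +
  fixes scaleC :: "complex \<Rightarrow> 'a \<Rightarrow> 'a" (infixr "*\<^sub>C" 75)
  assumes scaleC_add_left: "(a + b) *\<^sub>C x = a *\<^sub>C x + b *\<^sub>C x"
    and scaleC_add_right: "a *\<^sub>C (x + y) = a *\<^sub>C x + a *\<^sub>C y"
    and scaleC_scaleC: "a *\<^sub>C (b *\<^sub>C x) = (a * b) *\<^sub>C x"
    and scaleC_one: "1 *\<^sub>C x = x"
    and scaleR_scaleC: "r *\<^sub>R x = complex_of_real r *\<^sub>C x"
    and norm_scaleC: "norm (a *\<^sub>C x) = cmod a * norm x"

definition C0_semigroup :: "(real \<Rightarrow> 'a::cbanach \<Rightarrow> 'a) \<Rightarrow> bool" where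
  "C0_semigroup T \<longleftrightarrow>
     (\<forall>t\<ge>0. bounded_linear (T t) \<and> (\<forall>c x. T t (c *\<^sub>C x) = c *\<^sub>C T t x)) \<and>
     T 0 = id \<and>
     (\<forall>s\<ge>0. \<forall>t\<ge>0. T (s + t) = T s \<circ> T t) \<and>
     (\<forall>x. ((\<lambda>t. T t x) \<longlongrightarrow> x) (at_right 0))"

definition is_generator :: "(real \<Rightarrow> 'a::cbanach \<Rightarrow> 'a) \<Rightarrow> 'a set \<Rightarrow> ('a \<Rightarrow> 'a) \<Rightarrow> bool" where
  "is_generator T D A \<longleftrightarrow>
     D = {x. \<exists>y. ((\<lambda>h. (1 / h) *\<^sub>R (T h x - x)) \<longlongrightarrow> y) (at_right 0)} \<and>
     (\<forall>x\<in>D. ((\<lambda>h. (1 / h) *\<^sub>R (T h x - x)) \<longlongrightarrow> A x) (at_right 0))"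

text \<open>An operator Q in B(X, X*) is encoded by its pairing: Q x y = \<langle>Q x, y\<rangle>.
  Q x is antilinear, Q is linear, and Q is bounded.\<close>
definition bounded_op_to_antidual :: "('a::cbanach \<Rightarrow> 'a \<Rightarrow> complex) \<Rightarrow> bool" where
  "bounded_op_to_antidual Q \<longleftrightarrow>
     (\<forall>x y z. Q x (y + z) = Q x y + Q x z) \<and>
     (\<forall>x y c. Q x (c *\<^sub>C y) = cnj c * Q x y) \<and>
     (\<forall>x x' y. Q (x + x') y = Q x y + Q x' y) \<and>
     (\<forall>x y c. Q (c *\<^sub>C x) y = c * Q x y) \<and>
     (\<exists>C. \<forall>x y. norm (Q x y) \<le> C * norm x * norm y)"

text \<open>Positivity (order on complex from Complex_Order: z \<ge> 0 means z real and nonnegative).\<close>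
definition positive_op :: "('a::cbanach \<Rightarrow> 'a \<Rightarrow> complex) \<Rightarrow> bool" where
  "positive_op Q \<longleftrightarrow> bounded_op_to_antidual Q \<and> (\<forall>x. Q x x \<ge> 0)"

end

theory Submission
  imports Defs
begin

lemma mono_right_aux:
  fixes f :: "real \<Rightarrow> real"
  assumes ab: "a \<le> b" and cont: "continuous_on {a..b} f"
    and right: "\<And>t e. t \<in> {a..<b} \<Longrightarrow> e > 0 \<Longrightarrow> \<exists>d>0. \<forall>h. 0 < h \<and> h < d \<longrightarrow> f (t + h) \<le> f t + e * h"
    and e: "e > 0"
  shows "f b \<le> f a + e * (b - a)"
proof (rule ccontr)
  assume nb: "\<not> f b \<le> f a + e * (b - a)"
  define F where "F s = f s - f a - e * (s - a)" for s
  have contF: "continuous_on {a..b} F" unfolding F_def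
    by (intro continuous_intros cont)
  define Z where "Z = {s \<in> {a..b}. F s \<le> 0}"
  have "closed Z" unfolding Z_def
    using continuous_on_closed_Collect_le[OF contF continuous_on_const, of 0] by simp
  moreover have "a \<in> Z" using ab by (simp add: Z_def F_def)
  moreover have bddZ: "bdd_above Z" unfolding Z_def by (rule bdd_aboveI[of _ b]) auto
  ultimately have sZ: "Sup Z \<in> Z" using closed_contains_Sup by blast
  define s where "s = Sup Z"
  have "s \<in> {a..b}" "F s \<le> 0" using sZ by (auto simp: Z_def s_def)
  moreover have "F b > 0" using nb by (simp add: F_def)
  ultimately have "s < b" by (metis atLeastAtMost_iff order_le_less not_le)
  have above: "F u > 0" if "u \<in> {s<..b}" for u
  proof (rule ccontr)
    assume "\<not> F u > 0"
    then have "u \<in> Z" using that \<open>s \<in> {a..b}\<close> by (auto simp: Z_def)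
    then have "u \<le> s" unfolding s_def by (rule cSup_upper[OF _ bddZ])
    with that show False by auto
  qed
  obtain d where d: "d > 0" "\<And>h. 0 < h \<and> h < d \<longrightarrow> f (s + h) \<le> f s + e * h"
    using right[of s e] \<open>s \<in> {a..b}\<close> \<open>s < b\<close> e by auto
  define h where "h = min (d/2) (b - s)"
  have h: "0 < h" "h < d" "h \<le> b - s" using d \<open>s < b\<close> by (auto simp: h_def)
  have "F (s + h) \<le> F s" using d(2)[of h] h by (simp add: F_def algebra_simps)
  moreover have "F (s + h) > 0" using above[of "s+h"] h by auto
  ultimately show False using \<open>F s \<le> 0\<close> by linarith
qed

lemma mono_right:
  fixes f :: "real \<Rightarrow> real"
  assumes ab: "a \<le> b" and cont: "continuous_on {a..b} f"
    and right: "\<And>t e. t \<in> {a..<b} \<Longrightarrow> e > 0 \<Longrightarrow> \<exists>d>0. \<forall>h. 0 < h \<and> h < d \<longrightarrow> f (t + h) \<le> f t - c * h + e * h"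
  shows "f b \<le> f a - c * (b - a)"
proof -
  define g where "g t = f t + c * t" for t
  have cg: "continuous_on {a..b} g" unfolding g_def by (intro continuous_intros cont)
  have rg: "\<exists>d>0. \<forall>h. 0 < h \<and> h < d \<longrightarrow> g (t + h) \<le> g t + e * h" if tt: "t \<in> {a..<b}" "e > 0" for t e
  proof -
    obtain d where "d > 0" "\<forall>h. 0 < h \<and> h < d \<longrightarrow> f (t + h) \<le> f t - c * h + e * h"
      using right[OF tt] by auto
    then show ?thesis by (intro exI[of _ d]) (auto simp: g_def algebra_simps)
  qed
  have "g b \<le> g a + e * (b - a)" if "e > 0" for e
    using mono_right_aux[OF ab cg rg that] by blast
  then have "g b \<le> g a"
  proof (cases "a = b")
    case False
    with ab have "b - a > 0" by simp
    show ?thesis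
    proof (rule field_le_epsilon)
      fix e :: real assume "e > 0"
      then have "g b \<le> g a + (e / (b - a)) * (b - a)"
        using \<open>\<And>e. e > 0 \<Longrightarrow> _\<close>[of "e / (b-a)"] \<open>b - a > 0\<close> by simp
      then show "g b \<le> g a + e" using \<open>b - a > 0\<close> by simp
    qed
  qed simp
  then show ?thesis by (simp add: g_def algebra_simps)
qed

lemma UBP:
  fixes S :: "'i \<Rightarrow> 'a::banach \<Rightarrow> 'b::real_normed_vector"
  assumes lin: "\<And>i. bounded_linear (S i)"
    and pw: "\<And>x. \<exists>B. \<forall>i. norm (S i x) \<le> B"
  shows "\<exists>K. \<forall>i x. norm (S i x) \<le> K * norm x"
proof -
  define F where "F n = {x. \<forall>i. norm (S i x) \<le> real n}" for n :: nat
  have clF: "closed (F n)" for n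
  proof -
    have "F n = (\<Inter>i. {x. norm (S i x) \<le> real n})" by (auto simp: F_def)
    moreover have "closed {x. norm (S i x) \<le> real n}" for i
      by (intro closed_Collect_le continuous_intros linear_continuous_at lin continuous_at_imp_continuous_on)
         (simp add: continuous_on_eq_continuous_at linear_continuous_at lin)
    ultimately show ?thesis by auto
  qed
  have Un: "(\<Union>n. F n) = UNIV"
  proof (rule set_eqI, rule iffI)
    fix x
    obtain B where "\<forall>i. norm (S i x) \<le> B" using pw by auto
    obtain n :: nat where "B \<le> real n" using real_arch_simple by auto
    then have "x \<in> F (n)" using \<open>\<forall>i. _\<close> by (auto simp: F_def intro: order_trans)
    then show "x \<in> (\<Union>n. F n)" by auto
  qed simp
  have "\<exists>n. euclidean interior_of F n \<noteq> {}"
  proof (rule ccontr)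
    assume "\<not> ?thesis"
    then have "euclidean interior_of (\<Union>(range F)) = {}"
      by (intro Baire_category_alt) (auto simp: completely_metrizable_space_euclidean clF)
    then show False using Un by simp
  qed
  then obtain n where "interior (F n) \<noteq> {}" by auto
  then obtain x0 r where r: "r > 0" "ball x0 r \<subseteq> F n"
    by (metis all_not_in_conv interiorE open_contains_ball_eq subset_trans)
  show ?thesis
  proof (intro exI allI)
    fix i x
    show "norm (S i x) \<le> (4 * real n / r) * norm x"
    proof (cases "x = 0")
      case True then show ?thesis using linear_0[OF bounded_linear.linear[OF lin]] by simp
    next
      case False
      define c where "c = r / (2 * norm x)"
      have c: "c > 0" using r False by (simp add: c_def)
      have "x0 + c *\<^sub>R x \<in> ball x0 r" using r False by (simp add: c_def dist_norm)
      then have n1: "norm (S i (x0 + c *\<^sub>R x)) \<le> real n" using r(2) unfolding F_def by blast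
      have "x0 \<in> ball x0 r" using r by simp
      then have n2: "norm (S i x0) \<le> real n" using r(2) unfolding F_def by blast
      have "S i (c *\<^sub>R x) = S i (x0 + c *\<^sub>R x) - S i x0"
        using lin[of i] by (simp add: linear_simps bounded_linear.linear)
      then have "norm (S i (c *\<^sub>R x)) \<le> 2 * real n"
        using n1 n2 norm_triangle_ineq4[of "S i (x0 + c *\<^sub>R x)" "S i x0"] by simp
      then have "c * norm (S i x) \<le> 2 * real n"
        using lin[of i] c by (simp add: linear_simps bounded_linear.linear)
      then have "norm (S i x) \<le> 2 * real n / c" using c by (simp add: field_simps)
      also have "\<dots> = (4 * real n / r) * norm x" using r False by (simp add: c_def field_simps)
      finally show ?thesis .
    qed
  qed
qed

lemma vderiv_quot:
  fixes f :: "real \<Rightarrow> 'a::real_normed_vector"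
  assumes "(f has_vector_derivative f') (at x within S)"
  shows "((\<lambda>y. (1 / (y - x)) *\<^sub>R (f y - f x)) \<longlongrightarrow> f') (at x within S)"
proof -
  have "((\<lambda>y. ((f y - f x) - (y - x) *\<^sub>R f') /\<^sub>R norm (y - x)) \<longlongrightarrow> 0) (at x within S)"
    using assms by (simp add: has_vector_derivative_def has_derivative_at_within)
  then have l: "((\<lambda>y. norm (((f y - f x) - (y - x) *\<^sub>R f') /\<^sub>R norm (y - x))) \<longlongrightarrow> 0) (at x within S)"
    by (rule tendsto_norm_zero)
  have ev: "\<forall>\<^sub>F y in at x within S. norm (((f y - f x) - (y - x) *\<^sub>R f') /\<^sub>R norm (y - x))
        = norm ((1 / (y - x)) *\<^sub>R (f y - f x) - f')"
  proof -
    have "norm (((f y - f x) - (y - x) *\<^sub>R f') /\<^sub>R norm (y - x))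
        = norm ((1 / (y - x)) *\<^sub>R (f y - f x) - f')" if "y \<noteq> x" for y
    proof -
      have "(1 / (y - x)) *\<^sub>R (f y - f x) - f' = (1 / (y - x)) *\<^sub>R ((f y - f x) - (y - x) *\<^sub>R f')"
        using that by (simp add: scaleR_diff_right)
      then show ?thesis by (simp add: divide_simps)
    qed
    then show ?thesis by (auto simp: eventually_at_filter)
  qed
  have "((\<lambda>y. norm ((1 / (y - x)) *\<^sub>R (f y - f x) - f')) \<longlongrightarrow> 0) (at x within S)"
    using tendsto_cong[OF ev] l by simp
  then show ?thesis
    by (simp add: tendsto_norm_zero_iff LIM_zero_iff)
qed

locale sg =
  fixes T :: "real \<Rightarrow> 'a::cbanach \<Rightarrow> 'a"
    and D :: "'a set" and A :: "'a \<Rightarrow> 'a"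
    and Q :: "'a \<Rightarrow> 'a \<Rightarrow> complex"
  assumes C0: "C0_semigroup T"
    and gen: "is_generator T D A"
    and pos: "positive_op Q"
    and lyap: "\<forall>x\<in>D. Q (A x) x + Q x (A x) \<le> - complex_of_real ((norm x)\<^sup>2)"
begin

lemma bl: "t \<ge> 0 \<Longrightarrow> bounded_linear (T t)"
  using C0 by (auto simp: C0_semigroup_def)

lemma T0[simp]: "T 0 x = x"
  using C0 by (auto simp: C0_semigroup_def)

lemma semi: "s \<ge> 0 \<Longrightarrow> t \<ge> 0 \<Longrightarrow> T (s + t) x = T s (T t x)"
  using C0 by (auto simp: C0_semigroup_def)

lemma rc: "((\<lambda>t. T t x) \<longlongrightarrow> x) (at_right 0)"
  using C0 by (auto simp: C0_semigroup_def)

lemma Tdiff: "t \<ge> 0 \<Longrightarrow> T t (a - b) = T t a - T t b"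
  using bl[of t] by (simp add: bounded_linear.linear linear_diff)

lemma TscaleR: "t \<ge> 0 \<Longrightarrow> T t (r *\<^sub>R a) = r *\<^sub>R T t a"
  using bl[of t] by (simp add: bounded_linear.linear linear_scale)

lemma rc_eps:
  assumes "e > 0"
  shows "\<exists>b>0. \<forall>h. 0 \<le> h \<and> h < b \<longrightarrow> norm (T h x - x) < e"
proof -
  have "\<forall>\<^sub>F h in at_right 0. dist (T h x) x < e"
    using rc[of x] assms by (simp add: tendsto_iff)
  then obtain b where b: "b > 0" "\<forall>h>0. h < b \<longrightarrow> dist (T h x) x < e"
    by (auto simp: eventually_at_right_field)
  show ?thesis
  proof (intro exI[of _ b] conjI allI impI)
    fix h assume "0 \<le> h \<and> h < b"
    then show "norm (T h x - x) < e"
      using b assms by (cases "h = 0") (auto simp: dist_norm)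
  qed (use b in auto)
qed

lemma local_bound0: "\<exists>d>0. \<exists>K\<ge>1. \<forall>t\<in>{0..d}. \<forall>x. norm (T t x) \<le> K * norm x"
proof (rule ccontr)
  assume na: "\<not> ?thesis"
  have "\<forall>n::nat. \<exists>t x. t \<in> {0..1 / (real n + 1)} \<and> norm (T t x) > (real n + 1) * norm x"
  proof
    fix n :: nat
    have "\<not> (\<forall>t\<in>{0..1 / (real n + 1)}. \<forall>x. norm (T t x) \<le> (real n + 1) * norm x)"
    proof
      assume H: "\<forall>t\<in>{0..1 / (real n + 1)}. \<forall>x. norm (T t x) \<le> (real n + 1) * norm x"
      have "1 / (real n + 1) > 0" "real n + 1 \<ge> 1" by auto
      then show False using na H by blast
    qed
    then show "\<exists>t x. t \<in> {0..1 / (real n + 1)} \<and> norm (T t x) > (real n + 1) * norm x"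
      by (auto simp: not_le)
  qed
  then obtain tn xn where tx: "\<And>n. tn n \<in> {0..1 / (real n + 1)}"
      "\<And>n. norm (T (tn n) (xn n)) > (real n + 1) * norm (xn n)"
    by metis
  have pw: "\<exists>B. \<forall>n. norm (T (tn n) x) \<le> B" for x
  proof -
    have "(\<lambda>n. T (tn n) x) \<longlonglongrightarrow> x"
    proof (rule metric_LIMSEQ_I)
      fix e :: real assume "e > 0"
      then obtain b where b: "b > 0" "\<forall>h. 0 \<le> h \<and> h < b \<longrightarrow> norm (T h x - x) < e"
        using rc_eps by blast
      obtain N :: nat where N: "1 / b < real N" using reals_Archimedean2 by blast
      show "\<exists>N. \<forall>n\<ge>N. dist (T (tn n) x) x < e"
      proof (intro exI allI impI)
        fix n assume "n \<ge> N"
        have "1 / (real n + 1) < b"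
        proof -
          have "1 / b < real n + 1" using N \<open>n \<ge> N\<close> by linarith
          then show ?thesis using b(1) by (simp add: field_simps)
        qed
        then have "tn n < b" "0 \<le> tn n" using tx(1)[of n] by auto
        then show "dist (T (tn n) x) x < e" using b(2) by (simp add: dist_norm)
      qed
    qed
    then have "Bseq (\<lambda>n. T (tn n) x)" using convergent_imp_Bseq convergentI by blast
    then show ?thesis by (auto simp: Bseq_def)
  qed
  obtain K where K: "\<forall>n y. norm (T (tn n) y) \<le> K * norm y"
    using UBP[of "\<lambda>n. T (tn n)", OF bl pw] tx(1) by auto
  obtain n :: nat where n: "K \<le> real n" using real_arch_simple by blast
  have "(real n + 1) * norm (xn n) < K * norm (xn n)" using tx(2)[of n] K by (meson less_le_trans)
  then have "norm (xn n) > 0" "real n + 1 < K"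
    using mult_right_less_imp_less by (fastforce, metis norm_ge_zero mult_right_less_imp_less)
  with n show False by linarith
qed

lemma local_bound: "\<exists>K\<ge>1. \<forall>s\<in>{0..t}. \<forall>x. norm (T s x) \<le> K * norm x"
proof -
  obtain d K where dK: "d > 0" "K \<ge> 1" "\<forall>t\<in>{0..d}. \<forall>x. norm (T t x) \<le> K * norm x"
    using local_bound0 by blast
  have ind: "\<forall>s\<in>{0..real n * d}. \<forall>x. norm (T s x) \<le> K ^ n * norm x" for n
  proof (induction n)
    case 0 then show ?case by simp
  next
    case (Suc n)
    show ?case
    proof (intro ballI allI)
      fix s x assume s: "s \<in> {0..real (Suc n) * d}"
      show "norm (T s x) \<le> K ^ Suc n * norm x"
      proof (cases "s \<le> d")
        case True
        then have "norm (T s x) \<le> K * norm x" using dK s by auto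
        also have "\<dots> \<le> K ^ Suc n * norm x"
          using dK(2) by (intro mult_right_mono) (auto intro: order_trans[OF _ power_increasing[of 1 "Suc n" K]])
        finally show ?thesis .
      next
        case False
        then have s1: "s - d \<in> {0..real n * d}" using s by (auto simp: algebra_simps)
        have "T s x = T d (T (s - d) x)" using semi[of d "s - d" x] False dK(1) by simp
        then have "norm (T s x) \<le> K * norm (T (s - d) x)" using dK by auto
        also have "\<dots> \<le> K * (K ^ n * norm x)" using Suc.IH s1 dK(2) by (intro mult_left_mono) auto
        finally show ?thesis by simp
      qed
    qed
  qed
  obtain n :: nat where "t / d \<le> real n" using real_arch_simple by blast
  then have "t \<le> real n * d" using dK(1) by (simp add: field_simps)
  then show ?thesis using ind[of n] dK(2)
    by (intro exI[of _ "K ^ n"]) (auto simp: one_le_power)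
qed

lemma diff_eq: "u \<ge> 0 \<Longrightarrow> h \<ge> 0 \<Longrightarrow> T (u + h) x - T u x = T u (T h x - x)"
  by (simp add: semi Tdiff)

lemma cont: "continuous_on {0..} (\<lambda>t. T t x)"
  unfolding continuous_on_iff
proof (intro ballI allI impI)
  fix t :: real and e :: real assume t: "t \<in> {0..}" and e: "e > 0"
  obtain K where K: "K \<ge> 1" "\<forall>s\<in>{0..t+1}. \<forall>x. norm (T s x) \<le> K * norm x"
    using local_bound by blast
  obtain b where b: "b > 0" "\<forall>h. 0 \<le> h \<and> h < b \<longrightarrow> norm (T h x - x) < e / K"
    using rc_eps[of "e / K" x] e K(1) by auto
  show "\<exists>d>0. \<forall>s\<in>{0..}. dist s t < d \<longrightarrow> dist (T s x) (T t x) < e"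
  proof (intro exI[of _ "min b 1"] conjI ballI impI)
    fix s :: real assume s: "s \<in> {0..}" "dist s t < min b 1"
    show "dist (T s x) (T t x) < e"
    proof (cases "t \<le> s")
      case True
      have "T s x - T t x = T t (T (s - t) x - x)" using diff_eq[of t "s - t" x] True t by simp
      moreover have "norm (T t (T (s - t) x - x)) \<le> K * norm (T (s - t) x - x)" using K t by auto
      moreover have "norm (T (s - t) x - x) < e / K" using b s True by (auto simp: dist_real_def)
      ultimately show ?thesis using K(1) by (simp add: dist_norm field_simps)
    next
      case False
      have "T t x - T s x = T s (T (t - s) x - x)" using diff_eq[of s "t - s" x] False s by simp
      moreover have "norm (T s (T (t - s) x - x)) \<le> K * norm (T (t - s) x - x)" using K s False t by auto
      moreover have "norm (T (t - s) x - x) < e / K" using b s False by (auto simp: dist_real_def)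
      ultimately show ?thesis using K(1) by (simp add: dist_norm norm_minus_commute field_simps)
    qed
  qed (use b in auto)
qed

end

context sg begin

lemma Qprops:
  "Q (a + a') b = Q a b + Q a' b" "Q a (b + b') = Q a b + Q a b'"
  "Q (c *\<^sub>C a) b = c * Q a b" "Q a (c *\<^sub>C b) = cnj c * Q a b"
  "0 \<le> Q a a"
  using pos by (auto simp: positive_op_def bounded_op_to_antidual_def)

lemma Qbound: "\<exists>C. \<forall>x y. norm (Q x y) \<le> C * norm x * norm y"
  using pos by (auto simp: positive_op_def bounded_op_to_antidual_def)

lemma Qbb: "bounded_bilinear Q"
proof
  fix a a' b b' :: 'a and r :: real
  show "Q (a + a') b = Q a b + Q a' b" "Q a (b + b') = Q a b + Q a b'" by (rule Qprops)+
  show "Q (r *\<^sub>R a) b = r *\<^sub>R Q a b"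
    by (simp add: scaleR_scaleC Qprops scaleR_conv_of_real)
  show "Q a (r *\<^sub>R b) = r *\<^sub>R Q a b"
    by (simp add: scaleR_scaleC Qprops scaleR_conv_of_real)
  obtain C where "\<forall>x y. norm (Q x y) \<le> C * norm x * norm y" using Qbound by blast
  then show "\<exists>K. \<forall>a b. norm (Q a b) \<le> norm a * norm b * K"
    by (intro exI[of _ C]) (simp add: mult.commute mult.left_commute)
qed

lemma AD: "x \<in> D \<Longrightarrow> ((\<lambda>h. (1 / h) *\<^sub>R (T h x - x)) \<longlongrightarrow> A x) (at_right 0)"
  using gen by (auto simp: is_generator_def)

lemma Dset: "D = {x. \<exists>y. ((\<lambda>h. (1 / h) *\<^sub>R (T h x - x)) \<longlongrightarrow> y) (at_right 0)}"
  using gen unfolding is_generator_def by (rule conjunct1)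

lemma Dinv:
  assumes x: "x \<in> D" and t: "t \<ge> 0"
  shows "T t x \<in> D"
proof -
  have lim: "((\<lambda>h. T t ((1 / h) *\<^sub>R (T h x - x))) \<longlongrightarrow> T t (A x)) (at_right 0)"
    by (rule bounded_linear.tendsto[OF bl[OF t] AD[OF x]])
  have eq: "T t ((1 / h) *\<^sub>R (T h x - x)) = (1 / h) *\<^sub>R (T h (T t x) - T t x)" if "h > 0" for h
  proof -
    have "T h (T t x) = T (h + t) x" using semi[of h t x] t that by simp
    also have "\<dots> = T (t + h) x" by (simp add: add.commute)
    also have "\<dots> = T t (T h x)" using semi[of t h x] t that by simp
    finally have "T h (T t x) = T t (T h x)" .
    then show ?thesis using t by (simp add: TscaleR Tdiff)
  qed
  have ev: "\<forall>\<^sub>F h in at_right 0. T t ((1 / h) *\<^sub>R (T h x - x)) = (1 / h) *\<^sub>R (T h (T t x) - T t x)"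
    by (rule eventually_mono[OF eventually_at_right_less eq])
  have "((\<lambda>h. (1 / h) *\<^sub>R (T h (T t x) - T t x)) \<longlongrightarrow> T t (A x)) (at_right 0)"
    using tendsto_cong[OF ev] lim by simp
  then show ?thesis by (subst Dset) blast
qed

definition gg :: "'a \<Rightarrow> real \<Rightarrow> real" where
  "gg x t = Re (Q (T t x) (T t x))"

lemma gg_cont: "continuous_on {0..} (gg x)"
  unfolding gg_def
  by (intro continuous_on_Re bounded_bilinear.continuous_on[OF Qbb] cont)

lemma gg_nonneg: "gg x t \<ge> 0"
  using Qprops(5)[of "T t x"] by (simp add: gg_def less_eq_complex_def)

lemma gg_le: "\<exists>C\<ge>0. \<forall>x t. gg x t \<le> C * (norm (T t x))\<^sup>2"
proof -
  obtain C where C: "\<forall>x y. norm (Q x y) \<le> C * norm x * norm y" using Qbound by blast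
  have "gg x t \<le> max C 0 * (norm (T t x))\<^sup>2" for x t
  proof -
    have "gg x t \<le> norm (Q (T t x) (T t x))" unfolding gg_def by (rule complex_Re_le_cmod)
    also have "\<dots> \<le> C * (norm (T t x))\<^sup>2" using C by (simp add: power2_eq_square mult.assoc)
    also have "\<dots> \<le> max C 0 * (norm (T t x))\<^sup>2" by (intro mult_right_mono) auto
    finally show ?thesis .
  qed
  then show ?thesis by (intro exI[of _ "max C 0"]) auto
qed

lemma gg_quot:
  assumes x: "x \<in> D" and t: "t \<ge> 0"
  defines "y \<equiv> T t x"
  shows "((\<lambda>h. (gg x (t + h) - gg x t) / h) \<longlongrightarrow> Re (Q (A y) y + Q y (A y))) (at_right 0)"
proof -
  have yD: "y \<in> D" using Dinv[OF x t] by (simp add: y_def)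
  have "((\<lambda>h. Q ((1 / h) *\<^sub>R (T h y - y)) (T h y) + Q y ((1 / h) *\<^sub>R (T h y - y)))
      \<longlongrightarrow> Q (A y) y + Q y (A y)) (at_right 0)"
    by (intro tendsto_add bounded_bilinear.tendsto[OF Qbb] AD[OF yD] rc tendsto_const)
  then have lim: "((\<lambda>h. Re (Q ((1 / h) *\<^sub>R (T h y - y)) (T h y) + Q y ((1 / h) *\<^sub>R (T h y - y))))
      \<longlongrightarrow> Re (Q (A y) y + Q y (A y))) (at_right 0)"
    by (rule tendsto_Re)
  have eq: "Re (Q ((1 / h) *\<^sub>R (T h y - y)) (T h y) + Q y ((1 / h) *\<^sub>R (T h y - y)))
      = (gg x (t + h) - gg x t) / h" if "h > 0" for h
  proof -
    have Tt: "T (t + h) x = T h y" using semi[of h t x] t that by (simp add: y_def add.commute)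
    have "Q ((1 / h) *\<^sub>R (T h y - y)) (T h y) + Q y ((1 / h) *\<^sub>R (T h y - y))
        = (1 / h) *\<^sub>R (Q (T h y) (T h y) - Q y y)"
      by (simp add: bounded_bilinear.scaleR_left[OF Qbb] bounded_bilinear.scaleR_right[OF Qbb]
          bounded_bilinear.diff_left[OF Qbb] bounded_bilinear.diff_right[OF Qbb] algebra_simps)
    then show ?thesis by (simp add: gg_def Tt y_def[symmetric] divide_simps)
  qed
  have ev: "\<forall>\<^sub>F h in at_right 0. Re (Q ((1 / h) *\<^sub>R (T h y - y)) (T h y) + Q y ((1 / h) *\<^sub>R (T h y - y)))
      = (gg x (t + h) - gg x t) / h"
    by (rule eventually_mono[OF eventually_at_right_less eq])
  show ?thesis using tendsto_cong[OF ev] lim by simp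
qed

lemma gg_dec:
  assumes x: "x \<in> D" and ab: "0 \<le> a" "a \<le> b"
    and c: "\<And>t. t \<in> {a..<b} \<Longrightarrow> c \<le> (norm (T t x))\<^sup>2"
  shows "gg x b \<le> gg x a - c * (b - a)"
proof (rule mono_right[OF ab(2)])
  show "continuous_on {a..b} (gg x)" using gg_cont by (rule continuous_on_subset) (use ab in auto)
next
  fix t e :: real assume t: "t \<in> {a..<b}" and e: "e > 0"
  have t0: "t \<ge> 0" using t ab by auto
  define y where "y = T t x"
  define L where "L = Re (Q (A y) y + Q y (A y))"
  have yD: "y \<in> D" using Dinv[OF x t0] by (simp add: y_def)
  have "L \<le> - (norm y)\<^sup>2" using lyap yD by (auto simp: L_def less_eq_complex_def)
  also have "\<dots> \<le> - c" using c[OF t] by (simp add: y_def)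
  finally have Lc: "L \<le> - c" .
  have "\<forall>\<^sub>F h in at_right 0. (gg x (t + h) - gg x t) / h < L + e"
    using order_tendstoD(2)[OF gg_quot[OF x t0], of "L + e"] e by (simp add: L_def y_def)
  then obtain d where d: "d > 0" "\<forall>h>0. h < d \<longrightarrow> (gg x (t + h) - gg x t) / h < L + e"
    by (auto simp: eventually_at_right_field)
  show "\<exists>d>0. \<forall>h. 0 < h \<and> h < d \<longrightarrow> gg x (t + h) \<le> gg x t - c * h + e * h"
  proof (intro exI[of _ d] conjI allI impI)
    fix h assume h: "0 < h \<and> h < d"
    then have "(gg x (t + h) - gg x t) / h < L + e" using d by auto
    then have "gg x (t + h) - gg x t < (L + e) * h" using h by (simp add: pos_divide_less_eq)
    moreover have "(L + e) * h \<le> (- c + e) * h" using Lc h by (intro mult_right_mono) auto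
    ultimately show "gg x (t + h) \<le> gg x t - c * h + e * h" by (simp add: algebra_simps)
  qed (use d in auto)
qed

end

context sg begin

lemma Tcomm: "s \<ge> 0 \<Longrightarrow> t \<ge> 0 \<Longrightarrow> T s (T t x) = T t (T s x)"
  by (metis semi add.commute)

lemma Dscale: "v \<in> D \<Longrightarrow> c *\<^sub>R v \<in> D"
proof -
  assume v: "v \<in> D"
  have "((\<lambda>h. c *\<^sub>R ((1 / h) *\<^sub>R (T h v - v))) \<longlongrightarrow> c *\<^sub>R A v) (at_right 0)"
    by (intro tendsto_scaleR tendsto_const AD[OF v])
  moreover have ev: "\<forall>\<^sub>F h in at_right 0. c *\<^sub>R ((1 / h) *\<^sub>R (T h v - v)) = (1 / h) *\<^sub>R (T h (c *\<^sub>R v) - c *\<^sub>R v)"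
  proof (rule eventually_mono[OF eventually_at_right_less])
    fix h :: real assume "0 < h"
    then show "c *\<^sub>R ((1 / h) *\<^sub>R (T h v - v)) = (1 / h) *\<^sub>R (T h (c *\<^sub>R v) - c *\<^sub>R v)"
      by (simp add: TscaleR algebra_simps)
  qed
  ultimately have "((\<lambda>h. (1 / h) *\<^sub>R (T h (c *\<^sub>R v) - c *\<^sub>R v)) \<longlongrightarrow> c *\<^sub>R A v) (at_right 0)"
    using tendsto_cong[OF ev] by simp
  then show ?thesis by (subst Dset) blast
qed

lemma dense: "x \<in> closure D"
proof -
  define f where "f u = T u x" for u
  have cf: "continuous_on {a..b} f" if "a \<ge> 0" for a b
    unfolding f_def using cont[of x] by (rule continuous_on_subset) (use that in auto)
  define V where "V r = integral {0..r} f" for r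
  have V0: "V 0 = 0" by (simp add: V_def)
  have Vder: "(V has_vector_derivative f s) (at s within {0..b})" if "0 \<le> s" "s \<le> b" for s b
    unfolding V_def using integral_has_vector_derivative[OF cf[of 0 b]] that by simp
  have at0: "((\<lambda>h. (1 / h) *\<^sub>R V h) \<longlongrightarrow> x) (at_right 0)"
  proof -
    have "((\<lambda>y. (1 / (y - 0)) *\<^sub>R (V y - V 0)) \<longlongrightarrow> f 0) (at 0 within {0..1})"
      by (rule vderiv_quot[OF Vder]) auto
    then show ?thesis using at_within_Icc_at_right[of "0::real" 1] by (simp add: V0 f_def)
  qed
  have atS: "((\<lambda>h. (1 / h) *\<^sub>R (V (s + h) - V s)) \<longlongrightarrow> f s) (at_right 0)" if "s > 0" for s
  proof -
    have "((\<lambda>y. (1 / (y - s)) *\<^sub>R (V y - V s)) \<longlongrightarrow> f s) (at s within {0..s+1})"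
      by (rule vderiv_quot[OF Vder]) (use that in auto)
    then have "((\<lambda>y. (1 / (y - s)) *\<^sub>R (V y - V s)) \<longlongrightarrow> f s) (at s)"
      using at_within_Icc_at[of 0 s "s+1"] that by simp
    then have "((\<lambda>h. (1 / (s + h - s)) *\<^sub>R (V (s + h) - V s)) \<longlongrightarrow> f s) (at 0)"
      by (rule LIM_offset_zero)
    then have "((\<lambda>h. (1 / h) *\<^sub>R (V (s + h) - V s)) \<longlongrightarrow> f s) (at 0)" by simp
    then show ?thesis by (rule tendsto_mono[OF at_le, rotated]) simp
  qed
  have VD: "V s \<in> D" if s0: "s > 0" for s
  proof -
    have eq: "(1 / h) *\<^sub>R (T h (V s) - V s) = (1 / h) *\<^sub>R (V (s + h) - V s) - (1 / h) *\<^sub>R V h"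
      if h: "h > 0" for h
    proof -
      have "T h (V s) = integral {0..s} (T h \<circ> f)"
        unfolding V_def
        by (rule integral_linear[symmetric, OF integrable_continuous_real[OF cf] bl]) (use h in auto)
      also have "\<dots> = integral {0..s} (f \<circ> ((+) h))"
        by (rule integral_cong) (use h in \<open>simp add: f_def semi\<close>)
      also have "\<dots> = integral {0 + h..s + h} f"
        by (rule integral_shift_Icc_real)
      finally have "T h (V s) = integral {h..s + h} f" by simp
      moreover have "V h + integral {h..s + h} f = V (s + h)"
        unfolding V_def by (rule Henstock_Kurzweil_Integration.integral_combine) (use h s0 in \<open>auto intro: integrable_continuous_real cf\<close>)
      ultimately have "T h (V s) - V s = (V (s + h) - V s) - V h" by (simp add: algebra_simps)
      then show ?thesis by (simp add: scaleR_diff_right)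
    qed
    have ev: "\<forall>\<^sub>F h in at_right 0. (1 / h) *\<^sub>R (V (s + h) - V s) - (1 / h) *\<^sub>R V h = (1 / h) *\<^sub>R (T h (V s) - V s)"
      by (rule eventually_mono[OF eventually_at_right_less]) (simp add: eq)
    have "((\<lambda>h. (1 / h) *\<^sub>R (V (s + h) - V s) - (1 / h) *\<^sub>R V h) \<longlongrightarrow> f s - x) (at_right 0)"
      by (intro tendsto_diff atS at0 s0)
    then have "((\<lambda>h. (1 / h) *\<^sub>R (T h (V s) - V s)) \<longlongrightarrow> f s - x) (at_right 0)"
      using tendsto_cong[OF ev] by simp
    then show ?thesis by (subst Dset) blast
  qed
  show ?thesis
  proof (rule Lim_in_closed_set[OF closed_closure _ _ at0])
    show "\<forall>\<^sub>F h in at_right 0. (1 / h) *\<^sub>R V h \<in> closure D"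
      by (rule eventually_mono[OF eventually_at_right_less]) (use VD Dscale closure_subset in blast)
  qed simp
qed

end

context sg begin

lemma unifD: "\<exists>B>0. \<forall>x\<in>D. \<forall>t\<ge>0. (norm (T t x))\<^sup>2 \<le> B * (norm x)\<^sup>2"
proof -
  obtain d K0 where dK: "d > 0" "K0 \<ge> 1" "\<forall>t\<in>{0..d}. \<forall>x. norm (T t x) \<le> K0 * norm x"
    using local_bound0 by blast
  obtain C where C: "C \<ge> 0" "\<forall>x t. gg x t \<le> C * (norm (T t x))\<^sup>2" using gg_le by blast
  define B where "B = K0\<^sup>2 * (1 + C / d)"
  have B1: "K0\<^sup>2 \<le> B" using dK C by (simp add: B_def field_simps)
  have B2: "K0\<^sup>2 * C / d \<le> B" using dK C by (simp add: B_def field_simps)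
  have "(norm (T t x))\<^sup>2 \<le> B * (norm x)\<^sup>2" if x: "x \<in> D" and t: "t \<ge> 0" for x t
  proof (cases "t \<le> d")
    case True
    then have "norm (T t x) \<le> K0 * norm x" using dK t by auto
    then have "(norm (T t x))\<^sup>2 \<le> (K0 * norm x)\<^sup>2" by (intro power_mono) auto
    also have "\<dots> = K0\<^sup>2 * (norm x)\<^sup>2" by (simp add: power_mult_distrib)
    also have "\<dots> \<le> B * (norm x)\<^sup>2" using B1 by (intro mult_right_mono) auto
    finally show ?thesis .
  next
    case False
    define a where "a = t - d"
    have a: "0 \<le> a" "a \<le> t" using False dK by (auto simp: a_def)
    define c where "c = (norm (T t x))\<^sup>2 / K0\<^sup>2"
    have cle: "c \<le> (norm (T s x))\<^sup>2" if s: "s \<in> {a..<t}" for s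
    proof -
      have s0: "s \<ge> 0" "t - s \<in> {0..d}" using s a by (auto simp: a_def)
      have "T t x = T (t - s) (T s x)" using semi[of "t - s" s x] s0 by simp
      then have "norm (T t x) \<le> K0 * norm (T s x)" using dK(3) s0 by auto
      then have "(norm (T t x))\<^sup>2 \<le> (K0 * norm (T s x))\<^sup>2" by (intro power_mono) auto
      then have "(norm (T t x))\<^sup>2 \<le> K0\<^sup>2 * (norm (T s x))\<^sup>2" by (simp add: power_mult_distrib)
      then show ?thesis using dK(2) by (simp add: c_def divide_le_eq mult.commute)
    qed
    have "gg x t \<le> gg x a - c * (t - a)" by (rule gg_dec[OF x a cle])
    moreover have "gg x a \<le> gg x 0 - 0 * (a - 0)" by (rule gg_dec[OF x _ a(1)]) auto
    moreover have "gg x 0 \<le> C * (norm x)\<^sup>2" using C by (metis T0)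
    moreover have "gg x t \<ge> 0" by (rule gg_nonneg)
    ultimately have "c * d \<le> C * (norm x)\<^sup>2" by (simp add: a_def)
    then have "(norm (T t x))\<^sup>2 * d \<le> K0\<^sup>2 * (C * (norm x)\<^sup>2)"
      using dK by (simp add: c_def field_simps)
    then have "(norm (T t x))\<^sup>2 \<le> (K0\<^sup>2 * C / d) * (norm x)\<^sup>2"
      using dK by (simp add: field_simps)
    also have "\<dots> \<le> B * (norm x)\<^sup>2" using B2 by (intro mult_right_mono) auto
    finally show ?thesis .
  qed
  moreover have "B > 0" using B1 dK by (smt (verit) one_le_power)
  ultimately show ?thesis by blast
qed

lemma decayD: "\<exists>t0>0. \<forall>x\<in>D. norm (T t0 x) \<le> norm x / 2"
proof -
  obtain B where B: "B > 0" "\<forall>x\<in>D. \<forall>t\<ge>0. (norm (T t x))\<^sup>2 \<le> B * (norm x)\<^sup>2" using unifD by blast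
  obtain C where C: "C \<ge> 0" "\<forall>x t. gg x t \<le> C * (norm (T t x))\<^sup>2" using gg_le by blast
  define t0 where "t0 = 4 * (B * C) + 1"
  have BC: "B * C \<ge> 0" using B C by simp
  have t0: "t0 > 0" "4 * (B * C) \<le> t0" using BC by (auto simp: t0_def)
  have "norm (T t0 x) \<le> norm x / 2" if x: "x \<in> D" for x
  proof -
    define c where "c = (norm (T t0 x))\<^sup>2 / B"
    have cle: "c \<le> (norm (T s x))\<^sup>2" if s: "s \<in> {0..<t0}" for s
    proof -
      have s0: "s \<ge> 0" "t0 - s \<ge> 0" using s by auto
      have "T t0 x = T (t0 - s) (T s x)" using semi[of "t0 - s" s x] s0 by simp
      then have "(norm (T t0 x))\<^sup>2 \<le> B * (norm (T s x))\<^sup>2"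
        using B(2) Dinv[OF x s0(1)] s0(2) by metis
      then show ?thesis using B(1) by (simp add: c_def divide_le_eq mult.commute)
    qed
    have "gg x t0 \<le> gg x 0 - c * (t0 - 0)" by (rule gg_dec[OF x _ _ cle]) (use t0 in auto)
    moreover have "gg x 0 \<le> C * (norm x)\<^sup>2" using C by (metis T0)
    moreover have "gg x t0 \<ge> 0" by (rule gg_nonneg)
    ultimately have "c * t0 \<le> C * (norm x)\<^sup>2" by simp
    then have "(norm (T t0 x))\<^sup>2 * t0 \<le> B * C * (norm x)\<^sup>2"
      using B(1) by (simp add: c_def field_simps)
    also have "\<dots> \<le> (t0 / 4) * (norm x)\<^sup>2" using t0 by (intro mult_right_mono) auto
    finally have "(norm (T t0 x))\<^sup>2 \<le> (norm x / 2)\<^sup>2"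
      using t0 by (simp add: field_simps power2_eq_square)
    then show ?thesis by (rule power2_le_imp_le) simp
  qed
  then show ?thesis using t0 by blast
qed

lemma decay: "\<exists>t0>0. \<forall>x. norm (T t0 x) \<le> norm x / 2"
proof -
  obtain t0 where t0: "t0 > 0" "\<forall>x\<in>D. norm (T t0 x) \<le> norm x / 2" using decayD by blast
  have cl: "closed {x. norm (T t0 x) \<le> norm x / 2}"
    by (intro closed_Collect_le continuous_intros linear_continuous_on bl) (use t0 in auto)
  have "closure D \<subseteq> {x. norm (T t0 x) \<le> norm x / 2}"
    by (rule closure_minimal) (use t0 cl in auto)
  then show ?thesis using dense t0 by blast
qed

lemma expstab: "\<exists>M \<ge> 1. \<exists>\<epsilon> > 0. \<forall>t\<ge>0. onorm (T t) \<le> M * exp (- \<epsilon> * t)"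
proof -
  obtain t0 where t0: "t0 > 0" "\<forall>x. norm (T t0 x) \<le> norm x / 2" using decay by blast
  obtain K where K: "K \<ge> 1" "\<forall>s\<in>{0..t0}. \<forall>x. norm (T s x) \<le> K * norm x"
    using local_bound by blast
  have ind: "\<forall>s\<in>{real n * t0..real (Suc n) * t0}. \<forall>x. norm (T s x) \<le> K * (1/2) ^ n * norm x" for n
  proof (induction n)
    case 0 then show ?case using K by simp
  next
    case (Suc n)
    show ?case
    proof (intro ballI allI)
      fix s x assume s: "s \<in> {real (Suc n) * t0..real (Suc (Suc n)) * t0}"
      then have s1: "s - t0 \<in> {real n * t0..real (Suc n) * t0}" by (auto simp: algebra_simps)
      have "s - t0 \<ge> 0" using s1 t0 by (smt (verit) atLeastAtMost_iff mult_nonneg_nonneg of_nat_0_le_iff)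
      then have "T s x = T (s - t0) (T t0 x)" using semi[of "s - t0" t0 x] t0 by simp
      then have "norm (T s x) \<le> K * (1/2) ^ n * norm (T t0 x)" using Suc.IH s1 by auto
      also have "\<dots> \<le> K * (1/2) ^ n * (norm x / 2)" using t0 K by (intro mult_left_mono) auto
      finally show "norm (T s x) \<le> K * (1/2) ^ Suc n * norm x" by simp
    qed
  qed
  define \<epsilon> where "\<epsilon> = ln 2 / t0"
  have eps: "\<epsilon> > 0" using t0 by (simp add: \<epsilon>_def)
  have "onorm (T t) \<le> (2 * K) * exp (- \<epsilon> * t)" if t: "t \<ge> 0" for t
  proof (rule onorm_bound)
    show "0 \<le> 2 * K * exp (- \<epsilon> * t)" using K by simp
    define n where "n = nat \<lfloor>t / t0\<rfloor>"
    have n1: "real n * t0 \<le> t" "t < real (Suc n) * t0"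
    proof -
      have "real n = of_int \<lfloor>t / t0\<rfloor>" using t t0 by (simp add: n_def)
      then have "real n \<le> t / t0" "t / t0 < real n + 1" by linarith+
      then show "real n * t0 \<le> t" "t < real (Suc n) * t0" using t0 by (auto simp: field_simps)
    qed
    have e2: "exp (- ln 2) = (1/2::real)" by (simp add: exp_minus)
    have "(1/2::real) ^ Suc n = exp (- ln 2) ^ Suc n" by (simp only: e2)
    also have "\<dots> = exp (real (Suc n) * (- ln 2))" by (rule exp_of_nat_mult[symmetric])
    also have "\<dots> \<le> exp (- \<epsilon> * t)"
    proof -
      have l2: "ln (2::real) > 0" by simp
      have "t * ln 2 \<le> (real (Suc n) * t0) * ln 2" using n1 l2 by (intro mult_right_mono) auto
      then have "\<epsilon> * t \<le> real (Suc n) * ln 2" using t0 by (simp add: \<epsilon>_def field_simps)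
      then show ?thesis by simp
    qed
    finally have pw: "(1/2::real) ^ n \<le> 2 * exp (- \<epsilon> * t)" by simp
    fix x
    have "norm (T t x) \<le> K * (1/2) ^ n * norm x" using ind[of n] n1 by auto
    also have "\<dots> \<le> K * (2 * exp (- \<epsilon> * t)) * norm x" using pw K by (intro mult_right_mono mult_left_mono) auto
    finally show "norm (T t x) \<le> 2 * K * exp (- \<epsilon> * t) * norm x" by simp
  qed
  moreover have "2 * K \<ge> 1" using K by simp
  ultimately show ?thesis using eps by blast
qed

end

theorem mainTheorem2:
  fixes T :: "real \<Rightarrow> 'a::cbanach \<Rightarrow> 'a"
    and D :: "'a set" and A :: "'a \<Rightarrow> 'a"
    and Q :: "'a \<Rightarrow> 'a \<Rightarrow> complex"
  assumes "C0_semigroup T"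
    and "is_generator T D A"
    and "positive_op Q"
    and "\<forall>x\<in>D. Q (A x) x + Q x (A x) \<le> - complex_of_real ((norm x)\<^sup>2)"
  shows "\<exists>M \<ge> 1. \<exists>\<epsilon> > 0. \<forall>t\<ge>0. onorm (T t) \<le> M * exp (- \<epsilon> * t)"
proof -
  interpret sg T D A Q using assms by unfold_locales
  show ?thesis by (rule expstab)
qed

end
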